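(* Let $D=D_1\cup D_2$ be the disjoint union of oriented virtual singular link diagrams $D_1$ and $D_2$ (with no crossings between $D_1$ and $D_2$). Then $R(D)=\phi(D)h+\psi(D)$ where $$\phi(D)=\phi(D_1)\psi(D_2)+\psi(D_1)\phi(D_2),\qquad \psi(D)=\phi(D_1)\phi(D_2)+\psi(D_1)\psi(D_2).$$
   Context: An oriented virtual singular link diagram is a generic immersion of finitely many oriented circles into $\mathbb{R}^2$ with finitely many transverse double points, each decorated as a classical crossing (with over/under information and the usual sign $\pm1$), a singular crossing, or a virtual crossing. At a classical or singular crossing, the oriented resolution replaces it by two disjoint arcs respecting orientation; the disoriented resolution replaces it by one arc joining the two incoming ends with a sink bivalent vertex and one arc joining the two outgoing ends with a source bivalent vertex. Virtual crossings are kept. A state $S$ of $D$ is a choice of resolution at every classical and singular crossing; it is a collection of immersed closed curves (all intersections virtual) with bivalent vertices, edge orientations alternating. $\|S\|$ = number of closed curves; $c(D)$ = number of classical crossings; $a(S)$ = #(negative classical crossings with oriented resolution) $-$ #(positive classical crossings with oriented resolution); $b(S)$ the same for disoriented resolutions; $\alpha(S),\beta(S)$ = numbers of singular crossings with oriented, resp. disoriented, resolution. An edge of $S$ is an arc between consecutive bivalent vertices (a closed curve without vertices is one edge); a weight map is $\tau:E(S)\to\{\pm1\}$ with different values on edges sharing a vertex; the parity $i(S)=\prod_v\tau(e_v)\tau(e_v')$ over all virtual crossings $v$, with $e_v,e_v'$ the edges meeting at $v$ (independent of $\tau$). With $\overline{R}(S)=A^{2a(S)+4b(S)}(-A^2-A^{-2})^{\alpha(S)+\|S\|}(-A^4-A^{-4})^{\beta(S)}$: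 $R(D)=(-1)^{c(D)}\sum_S\overline{R}(S)h^{\frac{1-i(S)}{2}}$, $\phi(D)=(-1)^{c(D)}\sum_{S:\,i(S)=-1}\overline{R}(S)$, $\psi(D)=(-1)^{c(D)}\sum_{S:\,i(S)=1}\overline{R}(S)$, so that $R(D)=\phi(D)h+\psi(D)$; the same definitions apply to $D_1$ and $D_2$. *)

theory Defs
  imports "HOL-Computational_Algebra.Formal_Laurent_Series" "HOL-Computational_Algebra.Polynomial"
begin

datatype ctype = Pos | Neg | Sing | Virt

text \<open>At every crossing x two oriented strands pass; strand k (k :: bool) enters x at
  the in-slot (x,k) and leaves x at the out-slot (x,k).  The arcs of the diagram are the
  segments between consecutive crossings; an arc is named by the out-slot (x,k) where it
  starts, and dnext D (x,k) = (y,l) means that this arc ends at the in-slot (y,l).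
  Crossingless circle components are recorded by the number dloops.\<close>
record 'c diagram =
  crossings :: "'c set"
  ctyp :: "'c \<Rightarrow> ctype"
  dnext :: "'c \<times> bool \<Rightarrow> 'c \<times> bool"
  dloops :: nat

definition arcs :: "('c, 'z) diagram_scheme \<Rightarrow> ('c \<times> bool) set" where
  "arcs D = crossings D \<times> UNIV"

definition wf_diagram :: "('c, 'z) diagram_scheme \<Rightarrow> bool" where
  "wf_diagram D \<longleftrightarrow> finite (crossings D) \<and> bij_betw (dnext D) (arcs D) (arcs D)"

definition classical :: "('c, 'z) diagram_scheme \<Rightarrow> 'c set" where
  "classical D = {x \<in> crossings D. ctyp D x = Pos \<or> ctyp D x = Neg}"

definition nonvirtual :: "('c, 'z) diagram_scheme \<Rightarrow> 'c set" where
  "nonvirtual D = {x \<in> crossings D. ctyp D x \<noteq> Virt}"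

definition virtual :: "('c, 'z) diagram_scheme \<Rightarrow> 'c set" where
  "virtual D = {x \<in> crossings D. ctyp D x = Virt}"

text \<open>Resolutions: oriented (Ori) or disoriented (Dis).  A state chooses a resolution at
  every classical and singular crossing (by convention the value is Ori elsewhere).\<close>
datatype res = Ori | Dis

definition states :: "('c, 'z) diagram_scheme \<Rightarrow> ('c \<Rightarrow> res) set" where
  "states D = {s. \<forall>x. x \<notin> nonvirtual D \<longrightarrow> s x = Ori}"

text \<open>Head-to-tail: arc p ends at in-slot (y,l) and the curve continues along arc q; at a virtual
  crossing the strand goes straight through (q = (y,l)), at an oriented resolution the incoming
  end of strand l is joined to the outgoing end of the other strand (q = (y, \<not> l)).
  Head-to-head (sink vertex) and tail-to-tail (source vertex) arise at disoriented resolutions.\<close>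
definition ht_join :: "('c, 'z) diagram_scheme \<Rightarrow> ('c \<Rightarrow> res) \<Rightarrow> 'c \<times> bool \<Rightarrow> 'c \<times> bool \<Rightarrow> bool" where
  "ht_join D s p q \<longleftrightarrow> p \<in> arcs D \<and> q \<in> arcs D \<and>
     (let (y, l) = dnext D p in
        (ctyp D y = Virt \<and> q = (y, l)) \<or>
        (ctyp D y \<noteq> Virt \<and> s y = Ori \<and> q = (y, \<not> l)))"

definition hh_join :: "('c, 'z) diagram_scheme \<Rightarrow> ('c \<Rightarrow> res) \<Rightarrow> 'c \<times> bool \<Rightarrow> 'c \<times> bool \<Rightarrow> bool" where
  "hh_join D s p q \<longleftrightarrow> p \<in> arcs D \<and> q \<in> arcs D \<and>
     (let (y, l) = dnext D p in
        ctyp D y \<noteq> Virt \<and> s y = Dis \<and> dnext D q = (y, \<not> l))"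

definition tt_join :: "('c, 'z) diagram_scheme \<Rightarrow> ('c \<Rightarrow> res) \<Rightarrow> 'c \<times> bool \<Rightarrow> 'c \<times> bool \<Rightarrow> bool" where
  "tt_join D s p q \<longleftrightarrow> p \<in> arcs D \<and> q \<in> arcs D \<and>
     (let (y, l) = p in ctyp D y \<noteq> Virt \<and> s y = Dis \<and> q = (y, \<not> l))"

definition joined :: "('c, 'z) diagram_scheme \<Rightarrow> ('c \<Rightarrow> res) \<Rightarrow> 'c \<times> bool \<Rightarrow> 'c \<times> bool \<Rightarrow> bool" where
  "joined D s p q \<longleftrightarrow> ht_join D s p q \<or> ht_join D s q p \<or> hh_join D s p q \<or> tt_join D s p q"

definition same_curve :: "('c, 'z) diagram_scheme \<Rightarrow> ('c \<Rightarrow> res) \<Rightarrow> ('c \<times> bool) rel" where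
  "same_curve D s = Id_on (arcs D) \<union> {(p, q). joined D s p q}\<^sup>+"

definition ncurves :: "('c, 'z) diagram_scheme \<Rightarrow> ('c \<Rightarrow> res) \<Rightarrow> nat" where
  "ncurves D s = card (arcs D // same_curve D s) + dloops D"

text \<open>Weight maps: the edges of the state (arcs between consecutive bivalent vertices) are the
  classes of arcs joined head-to-tail; a weight map is given on arcs, constant along edges,
  with values \<open>\<plusminus>1\<close>, and opposite values on the two edges at every bivalent vertex.
  (Crossingless circle components carry no virtual crossings and are irrelevant for the parity.)\<close>
definition weight_map :: "('c, 'z) diagram_scheme \<Rightarrow> ('c \<Rightarrow> res) \<Rightarrow> ('c \<times> bool \<Rightarrow> int) \<Rightarrow> bool" where
  "weight_map D s \<tau> \<longleftrightarrow>
     (\<forall>p\<in>arcs D. \<tau> p = 1 \<or> \<tau> p = -1) \<and>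
     (\<forall>p q. ht_join D s p q \<longrightarrow> \<tau> q = \<tau> p) \<and>
     (\<forall>p q. hh_join D s p q \<longrightarrow> \<tau> q = - \<tau> p) \<and>
     (\<forall>p q. tt_join D s p q \<longrightarrow> \<tau> q = - \<tau> p)"

text \<open>At a virtual crossing v the two edges meeting there are those containing the arcs
  (v,True) and (v,False) leaving v.\<close>
definition parity_with :: "('c, 'z) diagram_scheme \<Rightarrow> ('c \<times> bool \<Rightarrow> int) \<Rightarrow> int" where
  "parity_with D \<tau> = (\<Prod>v\<in>virtual D. \<tau> (v, True) * \<tau> (v, False))"

definition parity :: "('c, 'z) diagram_scheme \<Rightarrow> ('c \<Rightarrow> res) \<Rightarrow> int" where
  "parity D s = parity_with D (SOME \<tau>. weight_map D s \<tau>)"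

text \<open>The paper's remark that i(S) does not depend on the weight map (a consequence of the
  diagram being a planar immersion) as a property of the combinatorial diagram.\<close>
definition parity_independent :: "('c, 'z) diagram_scheme \<Rightarrow> bool" where
  "parity_independent D \<longleftrightarrow> (\<forall>s\<in>states D. \<forall>\<tau>1 \<tau>2.
     weight_map D s \<tau>1 \<longrightarrow> weight_map D s \<tau>2 \<longrightarrow> parity_with D \<tau>1 = parity_with D \<tau>2)"

definition ccount :: "('c, 'z) diagram_scheme \<Rightarrow> nat" where
  "ccount D = card (classical D)"

definition count_res :: "('c, 'z) diagram_scheme \<Rightarrow> ('c \<Rightarrow> res) \<Rightarrow> ctype \<Rightarrow> res \<Rightarrow> nat" where
  "count_res D s t r = card {x \<in> crossings D. ctyp D x = t \<and> s x = r}"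

definition a_st :: "('c, 'z) diagram_scheme \<Rightarrow> ('c \<Rightarrow> res) \<Rightarrow> int" where
  "a_st D s = int (count_res D s Neg Ori) - int (count_res D s Pos Ori)"

definition b_st :: "('c, 'z) diagram_scheme \<Rightarrow> ('c \<Rightarrow> res) \<Rightarrow> int" where
  "b_st D s = int (count_res D s Neg Dis) - int (count_res D s Pos Dis)"

definition alpha_st :: "('c, 'z) diagram_scheme \<Rightarrow> ('c \<Rightarrow> res) \<Rightarrow> nat" where
  "alpha_st D s = count_res D s Sing Ori"

definition beta_st :: "('c, 'z) diagram_scheme \<Rightarrow> ('c \<Rightarrow> res) \<Rightarrow> nat" where
  "beta_st D s = count_res D s Sing Dis"

text \<open>The variable A of Laurent polynomials (as formal Laurent series over the integers).\<close>
abbreviation varA :: "int \<Rightarrow> int fls" where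
  "varA k \<equiv> fls_X_intpow k"

definition Rbar :: "('c, 'z) diagram_scheme \<Rightarrow> ('c \<Rightarrow> res) \<Rightarrow> int fls" where
  "Rbar D s = varA (2 * a_st D s + 4 * b_st D s)
      * (- varA 2 - varA (-2)) ^ (alpha_st D s + ncurves D s)
      * (- varA 4 - varA (-4)) ^ (beta_st D s)"

text \<open>R(D) is a polynomial in h with coefficients Laurent polynomials in A.\<close>
definition Rinv :: "('c, 'z) diagram_scheme \<Rightarrow> int fls poly" where
  "Rinv D = (-1) ^ ccount D *
     (\<Sum>s\<in>states D. [: Rbar D s :] * [:0, 1:] ^ nat ((1 - parity D s) div 2))"

definition phi :: "('c, 'z) diagram_scheme \<Rightarrow> int fls" where
  "phi D = (-1) ^ ccount D * (\<Sum>s\<in>{s\<in>states D. parity D s = -1}. Rbar D s)"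

definition psi :: "('c, 'z) diagram_scheme \<Rightarrow> int fls" where
  "psi D = (-1) ^ ccount D * (\<Sum>s\<in>{s\<in>states D. parity D s = 1}. Rbar D s)"

definition dunion :: "'a diagram \<Rightarrow> 'b diagram \<Rightarrow> ('a + 'b) diagram" where
  "dunion D1 D2 =
     \<lparr> crossings = Inl ` crossings D1 \<union> Inr ` crossings D2,
       ctyp = case_sum (ctyp D1) (ctyp D2),
       dnext = (\<lambda>(z, k). case z of
                   Inl x \<Rightarrow> map_prod Inl id (dnext D1 (x, k))
                 | Inr y \<Rightarrow> map_prod Inr id (dnext D2 (y, k))),
       dloops = dloops D1 + dloops D2 \<rparr>"

end

theory Submission imports Defs
begin

lemma two_col_aux:
  "\<forall>X (r::'x\<Rightarrow>'x) h. card X = n \<longrightarrow> finite X \<longrightarrow>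
     (\<forall>x\<in>X. r x \<in> X \<and> r (r x) = x \<and> r x \<noteq> x) \<longrightarrow>
     (\<forall>x\<in>X. h x \<in> X \<and> h (h x) = x \<and> h x \<noteq> x) \<longrightarrow>
     (\<exists>c::'x\<Rightarrow>bool. \<forall>x\<in>X. c (r x) \<noteq> c x \<and> c (h x) \<noteq> c x)"
proof (induction n rule: less_induct)
  case (less n)
  show ?case
  proof (intro allI impI)
    fix X and r h :: "'x \<Rightarrow> 'x"
    assume cX: "card X = n" and fX: "finite X"
      and R: "\<forall>x\<in>X. r x \<in> X \<and> r (r x) = x \<and> r x \<noteq> x"
      and H: "\<forall>x\<in>X. h x \<in> X \<and> h (h x) = x \<and> h x \<noteq> x"
    have R1: "r u \<in> X" "r (r u) = u" "r u \<noteq> u" if "u \<in> X" for u using R that by auto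
    have H1: "h u \<in> X" "h (h u) = u" "h u \<noteq> u" if "u \<in> X" for u using H that by auto
    show "\<exists>c::'x\<Rightarrow>bool. \<forall>x\<in>X. c (r x) \<noteq> c x \<and> c (h x) \<noteq> c x"
    proof (cases "X = {}")
      case True then show ?thesis by auto
    next
      case False
      then obtain x where x: "x \<in> X" by auto
      define y where "y = r x"
      define z where "z = h x"
      define w where "w = h y"
      have y: "y \<in> X" "y \<noteq> x" "r y = x" "r x = y" using R1[OF x] y_def by auto
      have z: "z \<in> X" "z \<noteq> x" "h z = x" "h x = z" using H1[OF x] z_def by auto
      have w: "w \<in> X" "w \<noteq> y" "h w = y" "h y = w" using H1[OF y(1)] w_def by auto
      define X' where "X' = X - {x, y}"
      have X'I: "\<And>u. u \<in> X' \<longleftrightarrow> u \<in> X \<and> u \<noteq> x \<and> u \<noteq> y" by (auto simp: X'_def)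
      have fX': "finite X'" using fX X'_def by auto
      have cX': "card X' < n" using cX fX x y unfolding X'_def
        by (metis Diff_insert card_Diff2_less)
      have ru: "r u \<noteq> x \<and> r u \<noteq> y" if "u \<in> X'" for u
      proof -
        have u1: "u \<in> X" "u \<noteq> x" "u \<noteq> y" using that X'I by auto
        have "r u \<noteq> x"
        proof
          assume "r u = x" then have "r (r u) = r x" by simp
          then show False using R1(2)[OF u1(1)] y(4) u1(3) by simp
        qed
        moreover have "r u \<noteq> y"
        proof
          assume "r u = y" then have "r (r u) = r y" by simp
          then show False using R1(2)[OF u1(1)] y(3) u1(2) by simp
        qed
        ultimately show ?thesis by blast
      qed
      have R': "\<forall>u\<in>X'. r u \<in> X' \<and> r (r u) = u \<and> r u \<noteq> u"
      proof
        fix u assume u: "u \<in> X'"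
        then have u1: "u \<in> X" using X'I by simp
        show "r u \<in> X' \<and> r (r u) = u \<and> r u \<noteq> u" using R1[OF u1] ru[OF u] X'I by simp
      qed
      have IH: "\<And>h'. \<forall>u\<in>X'. h' u \<in> X' \<and> h' (h' u) = u \<and> h' u \<noteq> u \<Longrightarrow>
          \<exists>c::'x\<Rightarrow>bool. \<forall>u\<in>X'. c (r u) \<noteq> c u \<and> c (h' u) \<noteq> c u"
        by (rule less.IH[rule_format, OF cX' refl fX' R'[rule_format]]) auto
      have hu0: "h u \<noteq> x" if "u \<in> X" "u \<noteq> z" for u
      proof
        assume "h u = x" then have "h (h u) = h x" by simp
        then show False using H1(2)[OF that(1)] z(4) that(2) by simp
      qed
      have hu0': "h u \<noteq> y" if "u \<in> X" "u \<noteq> w" for u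
      proof
        assume "h u = y" then have "h (h u) = h y" by simp
        then show False using H1(2)[OF that(1)] w(4) that(2) by simp
      qed
      have hu0'': "h u \<noteq> z" if "u \<in> X" "u \<noteq> x" for u
      proof
        assume "h u = z" then have "h (h u) = h z" by simp
        then show False using H1(2)[OF that(1)] z(3) that(2) by simp
      qed
      have hu0''': "h u \<noteq> w" if "u \<in> X" "u \<noteq> y" for u
      proof
        assume "h u = w" then have "h (h u) = h w" by simp
        then show False using H1(2)[OF that(1)] w(3) that(2) by simp
      qed
      show ?thesis
      proof (cases "z = y")
        case True
        have hu: "h u \<noteq> x \<and> h u \<noteq> y" if "u \<in> X'" for u
        proof -
          have u1: "u \<in> X" "u \<noteq> x" "u \<noteq> y" using that X'I by auto
          show ?thesis using hu0[OF u1(1)] hu0''[OF u1(1,2)] u1 True by simp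
        qed
        have H': "\<forall>u\<in>X'. h u \<in> X' \<and> h (h u) = u \<and> h u \<noteq> u"
        proof
          fix u assume u: "u \<in> X'"
          then have u1: "u \<in> X" using X'I by simp
          show "h u \<in> X' \<and> h (h u) = u \<and> h u \<noteq> u" using H1[OF u1] hu[OF u] X'I by simp
        qed
        obtain c :: "'x \<Rightarrow> bool" where c: "\<forall>u\<in>X'. c (r u) \<noteq> c u \<and> c (h u) \<noteq> c u"
          using IH[OF H'] by blast
        define c' where "c' = c(x := True, y := False)"
        show ?thesis
        proof (intro exI ballI)
          fix u assume u: "u \<in> X"
          show "c' (r u) \<noteq> c' u \<and> c' (h u) \<noteq> c' u"
          proof (cases "u \<in> X'")
            case True
            have ux: "u \<noteq> x" "u \<noteq> y" using True X'I by auto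
            have "c (r u) \<noteq> c u" "c (h u) \<noteq> c u" using c True by blast+
            then show ?thesis unfolding c'_def using ru[OF True] hu[OF True] ux by simp
          next
            case False
            have hx: "h x = y" "h y = x" using z \<open>z = y\<close> by simp_all
            have "u = x \<or> u = y" using False u X'I by auto
            then show ?thesis
            proof
              assume "u = x" then show ?thesis using hx y unfolding c'_def by simp
            next
              assume "u = y" then show ?thesis using hx y unfolding c'_def by simp
            qed
          qed
        qed
      next
        case False
        have wx: "w \<noteq> x" using w z False by metis
        have zw: "z \<noteq> w" using z w y by metis
        define h' where "h' = h(z := w, w := z)"
        have zX': "z \<in> X'" "w \<in> X'" using z w False wx X'I by auto
        have hu: "h u \<noteq> x \<and> h u \<noteq> y \<and> h u \<noteq> z \<and> h u \<noteq> w"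
          if "u \<in> X'" "u \<noteq> z" "u \<noteq> w" for u
        proof -
          have u1: "u \<in> X" "u \<noteq> x" "u \<noteq> y" using that X'I by auto
          show ?thesis using hu0[OF u1(1) that(2)] hu0'[OF u1(1) that(3)]
              hu0''[OF u1(1,2)] hu0'''[OF u1(1,3)] by simp
        qed
        have H': "\<forall>u\<in>X'. h' u \<in> X' \<and> h' (h' u) = u \<and> h' u \<noteq> u"
        proof
          fix u assume u: "u \<in> X'"
          show "h' u \<in> X' \<and> h' (h' u) = u \<and> h' u \<noteq> u"
          proof (cases "u = z \<or> u = w")
            case True then show ?thesis using zX' zw by (auto simp: h'_def)
          next
            case False
            then have nz: "u \<noteq> z" "u \<noteq> w" by auto
            have hu': "h' u = h u" using False by (simp add: h'_def)
            have u1: "u \<in> X" using u X'I by simp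
            have "h' (h u) = h (h u)" using hu[OF u nz] by (simp add: h'_def)
            then show ?thesis unfolding hu' using hu[OF u nz] H1[OF u1] X'I by simp
          qed
        qed
        obtain c :: "'x \<Rightarrow> bool" where c: "\<forall>u\<in>X'. c (r u) \<noteq> c u \<and> c (h' u) \<noteq> c u"
          using IH[OF H'] by blast
        define c' where "c' = c(x := \<not> c z, y := c z)"
        have "c (h' z) \<noteq> c z" using c zX' by blast
        moreover have "h' z = w" by (simp add: h'_def)
        ultimately have czw: "c w \<noteq> c z" by simp
        show ?thesis
        proof (intro exI ballI)
          fix u assume u: "u \<in> X"
          show "c' (r u) \<noteq> c' u \<and> c' (h u) \<noteq> c' u"
          proof (cases "u \<in> X'")
            case True
            have ux: "u \<noteq> x" "u \<noteq> y" using True X'I by auto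
            have "c (r u) \<noteq> c u" using c True by blast
            then have 1: "c' (r u) \<noteq> c' u" using ux ru[OF True] unfolding c'_def by simp
            have 2: "c' (h u) \<noteq> c' u"
            proof (cases "u = z \<or> u = w")
              case True
              then show ?thesis
              proof
                assume "u = z" then show ?thesis using z ux czw y(2) unfolding c'_def by simp
              next
                assume "u = w" then show ?thesis using w ux czw y(2) unfolding c'_def by simp
              qed
            next
              case False
              then have nz: "u \<noteq> z" "u \<noteq> w" by auto
              have "h' u = h u" using False by (simp add: h'_def)
              moreover have "c (h' u) \<noteq> c u" using c \<open>u \<in> X'\<close> by blast
              ultimately have "c (h u) \<noteq> c u" by simp
              then show ?thesis using ux hu[OF \<open>u \<in> X'\<close> nz] unfolding c'_def by simp
            qed
            show ?thesis using 1 2 by blast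
          next
            case False
            have "u = x \<or> u = y" using False u X'I by auto
            then show ?thesis
            proof
              assume "u = x" then show ?thesis using y z \<open>z \<noteq> y\<close> unfolding c'_def by simp
            next
              assume "u = y" then show ?thesis using y w wx czw unfolding c'_def by simp
            qed
          qed
        qed
      qed
    qed
  qed
qed

lemma two_col:
  assumes "finite X"
    and "\<And>x. x\<in>X \<Longrightarrow> r x \<in> X \<and> r (r x) = x \<and> r x \<noteq> x"
    and "\<And>x. x\<in>X \<Longrightarrow> h x \<in> X \<and> h (h x) = x \<and> h x \<noteq> x"
  shows "\<exists>c::'x\<Rightarrow>bool. \<forall>x\<in>X. c (r x) \<noteq> c x \<and> c (h x) \<noteq> c x"
  using two_col_aux[rule_format, OF refl assms(1)] assms(2,3) by blast

definition dinv :: "('c, 'z) diagram_scheme \<Rightarrow> 'c \<times> bool \<Rightarrow> 'c \<times> bool" where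
  "dinv D = inv_into (arcs D) (dnext D)"

definition hmap :: "('c, 'z) diagram_scheme \<Rightarrow> ('c \<Rightarrow> res) \<Rightarrow> ('c \<times> bool) \<times> bool \<Rightarrow> ('c \<times> bool) \<times> bool" where
  "hmap D s e = (case e of
     (p, True) \<Rightarrow> (case dnext D p of (y, l) \<Rightarrow>
        if ctyp D y = Virt then ((y, l), False)
        else if s y = Ori then ((y, \<not> l), False)
        else (dinv D (y, \<not> l), True))
   | ((x, k), False) \<Rightarrow>
        if ctyp D x = Virt then (dinv D (x, k), True)
        else if s x = Ori then (dinv D (x, \<not> k), True)
        else ((x, \<not> k), False))"

lemma arcs_iff: "(x, k) \<in> arcs D \<longleftrightarrow> x \<in> crossings D" by (simp add: arcs_def)

lemma wf_facts:
  assumes "wf_diagram D"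
  shows "\<And>a. a \<in> arcs D \<Longrightarrow> dnext D a \<in> arcs D"
    and "\<And>a. a \<in> arcs D \<Longrightarrow> dinv D (dnext D a) = a"
    and "\<And>b. b \<in> arcs D \<Longrightarrow> dinv D b \<in> arcs D"
    and "\<And>b. b \<in> arcs D \<Longrightarrow> dnext D (dinv D b) = b"
    and "finite (arcs D)"
proof -
  have B: "bij_betw (dnext D) (arcs D) (arcs D)" using assms by (simp add: wf_diagram_def)
  show "\<And>a. a \<in> arcs D \<Longrightarrow> dnext D a \<in> arcs D" using B bij_betwE by blast
  show "\<And>a. a \<in> arcs D \<Longrightarrow> dinv D (dnext D a) = a"
    using B unfolding dinv_def by (simp add: bij_betw_inv_into_left)
  show "\<And>b. b \<in> arcs D \<Longrightarrow> dinv D b \<in> arcs D"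
    using B unfolding dinv_def by (metis bij_betw_def inv_into_into)
  show "\<And>b. b \<in> arcs D \<Longrightarrow> dnext D (dinv D b) = b"
    using B unfolding dinv_def by (simp add: bij_betw_inv_into_right)
  show "finite (arcs D)" using assms by (simp add: wf_diagram_def arcs_def)
qed

lemma hmap_invol:
  assumes wf: "wf_diagram D" and e: "e \<in> arcs D \<times> UNIV"
  shows "hmap D s e \<in> arcs D \<times> UNIV \<and> hmap D s (hmap D s e) = e \<and> hmap D s e \<noteq> e"
proof -
  note W = wf_facts[OF wf]
  obtain x k b where eq: "e = ((x, k), b)" by (metis prod.collapse)
  have xk: "(x, k) \<in> arcs D" using e eq by auto
  show ?thesis
  proof (cases b)
    case True
    obtain y l where yl: "dnext D (x, k) = (y, l)" by (metis prod.collapse)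
    have ylA: "(y, l) \<in> arcs D" using W(1)[OF xk] yl by simp
    have ylA': "(y, \<not> l) \<in> arcs D" using ylA by (simp add: arcs_iff)
    have inv1: "dinv D (y, l) = (x, k)" using W(2)[OF xk] yl by simp
    show ?thesis
    proof (cases "ctyp D y = Virt")
      case True
      then show ?thesis using eq \<open>b\<close> yl ylA inv1 by (simp add: hmap_def)
    next
      case nv: False
      show ?thesis
      proof (cases "s y = Ori")
        case True
        then show ?thesis using eq \<open>b\<close> yl ylA' inv1 nv by (simp add: hmap_def)
      next
        case False
        define q where "q = dinv D (y, \<not> l)"
        have q: "q \<in> arcs D" "dnext D q = (y, \<not> l)" using W(3,4)[OF ylA'] q_def by auto
        have qne: "q \<noteq> (x, k)" using q(2) yl by auto
        obtain qx qk where qe: "q = (qx, qk)" by (metis prod.collapse)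
        have "hmap D s e = (q, True)" using eq \<open>b\<close> yl nv False by (simp add: hmap_def q_def)
        moreover have "hmap D s (q, True) = e" using eq \<open>b\<close> q(2) nv False inv1 by (simp add: hmap_def)
        ultimately show ?thesis using q(1) qne eq by simp
      qed
    qed
  next
    case False
    have xc: "x \<in> crossings D" using xk by (simp add: arcs_iff)
    show ?thesis
    proof (cases "ctyp D x = Virt")
      case True
      define q where "q = dinv D (x, k)"
      have q: "q \<in> arcs D" "dnext D q = (x, k)" using W(3,4)[OF xk] q_def by auto
      have "hmap D s e = (q, True)" using eq \<open>\<not> b\<close> True by (simp add: hmap_def q_def)
      moreover have "hmap D s (q, True) = e" using eq \<open>\<not> b\<close> q(2) True by (simp add: hmap_def)
      ultimately show ?thesis using q(1) eq \<open>\<not> b\<close> by auto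
    next
      case nv: False
      show ?thesis
      proof (cases "s x = Ori")
        case True
        have xk': "(x, \<not> k) \<in> arcs D" using xc by (simp add: arcs_iff)
        define q where "q = dinv D (x, \<not> k)"
        have q: "q \<in> arcs D" "dnext D q = (x, \<not> k)" using W(3,4)[OF xk'] q_def by auto
        have "hmap D s e = (q, True)" using eq \<open>\<not> b\<close> True nv by (simp add: hmap_def q_def)
        moreover have "hmap D s (q, True) = e" using eq \<open>\<not> b\<close> q(2) True nv by (simp add: hmap_def)
        ultimately show ?thesis using q(1) eq \<open>\<not> b\<close> by auto
      next
        case False
        have xk': "(x, \<not> k) \<in> arcs D" using xc by (simp add: arcs_iff)
        show ?thesis using eq \<open>\<not> b\<close> False nv xk' by (simp add: hmap_def)
      qed
    qed
  qed
qed

lemma weight_map_exists: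
  fixes D :: "('c, 'z) diagram_scheme"
  assumes wf: "wf_diagram D"
  shows "\<exists>\<tau>. weight_map D s \<tau>"
proof -
  note W = wf_facts[OF wf]
  define X where "X = arcs D \<times> (UNIV :: bool set)"
  define r :: "('c \<times> bool) \<times> bool \<Rightarrow> ('c \<times> bool) \<times> bool" where "r = (\<lambda>(p, b). (p, \<not> b))"
  have fX: "finite X" using W(5) by (simp add: X_def)
  obtain c :: "('c \<times> bool) \<times> bool \<Rightarrow> bool" where
    c: "\<forall>x\<in>X. c (r x) \<noteq> c x \<and> c (hmap D s x) \<noteq> c x"
    using two_col[OF fX, of r "hmap D s"] hmap_invol[OF wf] unfolding X_def r_def by auto
  define \<tau> where "\<tau> = (\<lambda>p. if c (p, True) then 1 else (-1::int))"
  have cr: "c (p, False) = (\<not> c (p, True))" if "p \<in> arcs D" for p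
    using c that unfolding X_def r_def by force
  have ch: "c (hmap D s (p, b)) = (\<not> c (p, b))" if "p \<in> arcs D" for p b
    using c that unfolding X_def by force
  show ?thesis
  proof (intro exI)
    show "weight_map D s \<tau>" unfolding weight_map_def
    proof (intro conjI allI impI)
      show "\<forall>p\<in>arcs D. \<tau> p = 1 \<or> \<tau> p = - 1" by (simp add: \<tau>_def)
    next
      fix p q assume j: "ht_join D s p q"
      obtain y l where yl: "dnext D p = (y, l)" by (metis prod.collapse)
      have pq: "p \<in> arcs D" "q \<in> arcs D" using j by (auto simp: ht_join_def)
      have "hmap D s (p, True) = (q, False)" using j yl by (auto simp: ht_join_def hmap_def)
      then show "\<tau> q = \<tau> p" using ch[OF pq(1), of True] cr[OF pq(2)] by (simp add: \<tau>_def)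
    next
      fix p q assume j: "hh_join D s p q"
      obtain y l where yl: "dnext D p = (y, l)" by (metis prod.collapse)
      have pq: "p \<in> arcs D" "q \<in> arcs D" using j by (auto simp: hh_join_def)
      have "dinv D (y, \<not> l) = q" using j yl W(2)[OF pq(2)] by (auto simp: hh_join_def)
      then have "hmap D s (p, True) = (q, True)" using j yl by (auto simp: hh_join_def hmap_def)
      then show "\<tau> q = - \<tau> p" using ch[OF pq(1), of True] by (simp add: \<tau>_def)
    next
      fix p q assume j: "tt_join D s p q"
      obtain y l where yl: "p = (y, l)" by (metis prod.collapse)
      have pq: "p \<in> arcs D" "q \<in> arcs D" using j by (auto simp: tt_join_def)
      have "hmap D s (p, False) = (q, False)" using j yl by (auto simp: tt_join_def hmap_def)
      then show "\<tau> q = - \<tau> p" using ch[OF pq(1), of False] cr[OF pq(1)] cr[OF pq(2)]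
        by (simp add: \<tau>_def)
    qed
  qed
qed

lemma prod_pm1: "(\<forall>x\<in>A. f x = 1 \<or> f x = -1) \<Longrightarrow> prod f A = 1 \<or> prod f A = (-1 :: int)"
proof (induction A rule: infinite_finite_induct)
  case (insert x F)
  then show ?case by auto
qed auto

lemma parity_pm1:
  assumes wf: "wf_diagram D"
  shows "parity D s = 1 \<or> parity D s = -1"
proof -
  have wm: "weight_map D s (SOME \<tau>. weight_map D s \<tau>)"
    using weight_map_exists[OF wf] by (rule someI_ex)
  show ?thesis unfolding parity_def parity_with_def
  proof (rule prod_pm1, intro ballI)
    fix v assume "v \<in> virtual D"
    then have a: "(v, True) \<in> arcs D" "(v, False) \<in> arcs D" by (auto simp: virtual_def arcs_def)
    have A: "\<forall>p\<in>arcs D. (SOME \<tau>. weight_map D s \<tau>) p = 1 \<or> (SOME \<tau>. weight_map D s \<tau>) p = -1"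
      using wm unfolding weight_map_def by blast
    have "(SOME \<tau>. weight_map D s \<tau>) (v, True) = 1 \<or> (SOME \<tau>. weight_map D s \<tau>) (v, True) = -1"
      "(SOME \<tau>. weight_map D s \<tau>) (v, False) = 1 \<or> (SOME \<tau>. weight_map D s \<tau>) (v, False) = -1"
      using A a by blast+
    then show "(SOME \<tau>. weight_map D s \<tau>) (v, True) * (SOME \<tau>. weight_map D s \<tau>) (v, False) = 1 \<or>
      (SOME \<tau>. weight_map D s \<tau>) (v, True) * (SOME \<tau>. weight_map D s \<tau>) (v, False) = -1"
      by auto
  qed
qed

lemma finite_states:
  assumes "finite (crossings D)"
  shows "finite (states D)"
proof -
  have fN: "finite (nonvirtual D)" using assms by (simp add: nonvirtual_def)
  have U: "(UNIV :: res set) = {Ori, Dis}" using res.exhaust by blast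
  have fU: "finite (UNIV :: res set)" unfolding U by simp
  have "finite (PiE (nonvirtual D) (\<lambda>_. UNIV :: res set))"
    using fN fU by (intro finite_PiE) auto
  moreover have "(\<lambda>s. restrict s (nonvirtual D)) ` states D \<subseteq> PiE (nonvirtual D) (\<lambda>_. UNIV :: res set)"
    by auto
  moreover have "inj_on (\<lambda>s. restrict s (nonvirtual D)) (states D)"
  proof (rule inj_onI)
    fix s t assume st: "s \<in> states D" "t \<in> states D"
      "restrict s (nonvirtual D) = restrict t (nonvirtual D)"
    show "s = t"
    proof
      fix x show "s x = t x"
        using st by (cases "x \<in> nonvirtual D") (auto simp: states_def dest: fun_cong[of _ _ x])
    qed
  qed
  ultimately show ?thesis by (meson finite_imageD finite_subset)
qed

section \<open>Disjoint union\<close>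

abbreviation (input) L1 :: "'a \<times> bool \<Rightarrow> ('a + 'b) \<times> bool" where "L1 \<equiv> map_prod Inl id"
abbreviation (input) L2 :: "'b \<times> bool \<Rightarrow> ('a + 'b) \<times> bool" where "L2 \<equiv> map_prod Inr id"

lemma dU_simps:
  "crossings (dunion D1 D2) = Inl ` crossings D1 \<union> Inr ` crossings D2"
  "ctyp (dunion D1 D2) (Inl x) = ctyp D1 x"
  "ctyp (dunion D1 D2) (Inr y) = ctyp D2 y"
  "dnext (dunion D1 D2) (Inl x, k) = map_prod Inl id (dnext D1 (x, k))"
  "dnext (dunion D1 D2) (Inr y, k) = map_prod Inr id (dnext D2 (y, k))"
  "dloops (dunion D1 D2) = dloops D1 + dloops D2"
  by (simp_all add: dunion_def)

lemma dU_arcs: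
  "(Inl x, k) \<in> arcs (dunion D1 D2) \<longleftrightarrow> (x, k) \<in> arcs D1"
  "(Inr y, k) \<in> arcs (dunion D1 D2) \<longleftrightarrow> (y, k) \<in> arcs D2"
  by (auto simp: arcs_def dU_simps)

lemma arc_split:
  assumes "\<And>x k. P (Inl x, k)" and "\<And>y k. P (Inr y, k)"
  shows "P z"
  using assms by (metis obj_sumE prod.collapse)

lemma ht_U:
  "ht_join (dunion D1 D2) s (Inl x, k) (Inl x', k') = ht_join D1 (s \<circ> Inl) (x, k) (x', k')"
  "ht_join (dunion D1 D2) s (Inr y, k) (Inr y', k') = ht_join D2 (s \<circ> Inr) (y, k) (y', k')"
  "\<not> ht_join (dunion D1 D2) s (Inl x, k) (Inr y, k')"
  "\<not> ht_join (dunion D1 D2) s (Inr y, k) (Inl x, k')"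
     apply (cases "dnext D1 (x, k)"; auto simp: ht_join_def dU_simps dU_arcs)
    apply (cases "dnext D2 (y, k)"; auto simp: ht_join_def dU_simps dU_arcs)
   apply (cases "dnext D1 (x, k)"; auto simp: ht_join_def dU_simps dU_arcs)
  apply (cases "dnext D2 (y, k)"; auto simp: ht_join_def dU_simps dU_arcs)
  done

lemma hh_U:
  "hh_join (dunion D1 D2) s (Inl x, k) (Inl x', k') = hh_join D1 (s \<circ> Inl) (x, k) (x', k')"
  "hh_join (dunion D1 D2) s (Inr y, k) (Inr y', k') = hh_join D2 (s \<circ> Inr) (y, k) (y', k')"
  "\<not> hh_join (dunion D1 D2) s (Inl x, k) (Inr y, k')"
  "\<not> hh_join (dunion D1 D2) s (Inr y, k) (Inl x, k')"
     apply (cases "dnext D1 (x, k)"; cases "dnext D1 (x', k')"; auto simp: hh_join_def dU_simps dU_arcs)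
    apply (cases "dnext D2 (y, k)"; cases "dnext D2 (y', k')"; auto simp: hh_join_def dU_simps dU_arcs)
   apply (cases "dnext D1 (x, k)"; cases "dnext D2 (y, k')"; auto simp: hh_join_def dU_simps dU_arcs)
  apply (cases "dnext D2 (y, k)"; cases "dnext D1 (x, k')"; auto simp: hh_join_def dU_simps dU_arcs)
  done

lemma tt_U:
  "tt_join (dunion D1 D2) s (Inl x, k) (Inl x', k') = tt_join D1 (s \<circ> Inl) (x, k) (x', k')"
  "tt_join (dunion D1 D2) s (Inr y, k) (Inr y', k') = tt_join D2 (s \<circ> Inr) (y, k) (y', k')"
  "\<not> tt_join (dunion D1 D2) s (Inl x, k) (Inr y, k')"
  "\<not> tt_join (dunion D1 D2) s (Inr y, k) (Inl x, k')"
  by (auto simp: tt_join_def dU_simps dU_arcs)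

lemma joined_U:
  "joined (dunion D1 D2) s (Inl x, k) (Inl x', k') = joined D1 (s \<circ> Inl) (x, k) (x', k')"
  "joined (dunion D1 D2) s (Inr y, k) (Inr y', k') = joined D2 (s \<circ> Inr) (y, k) (y', k')"
  "\<not> joined (dunion D1 D2) s (Inl x, k) (Inr y, k')"
  "\<not> joined (dunion D1 D2) s (Inr y, k) (Inl x, k')"
  by (simp_all add: joined_def ht_U hh_U tt_U)

lemma wm_restrict:
  assumes "weight_map (dunion D1 D2) s \<tau>"
  shows "weight_map D1 (s \<circ> Inl) (\<tau> \<circ> L1)" and "weight_map D2 (s \<circ> Inr) (\<tau> \<circ> L2)"
proof -
  have A: "\<forall>p\<in>arcs (dunion D1 D2). \<tau> p = 1 \<or> \<tau> p = -1"
    and B: "\<And>p q. ht_join (dunion D1 D2) s p q \<Longrightarrow> \<tau> q = \<tau> p"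
    and C: "\<And>p q. hh_join (dunion D1 D2) s p q \<Longrightarrow> \<tau> q = - \<tau> p"
    and E: "\<And>p q. tt_join (dunion D1 D2) s p q \<Longrightarrow> \<tau> q = - \<tau> p"
    using assms unfolding weight_map_def by blast+
  show "weight_map D1 (s \<circ> Inl) (\<tau> \<circ> L1)" unfolding weight_map_def
  proof (intro conjI allI impI ballI)
    fix p assume "p \<in> arcs D1" then show "(\<tau> \<circ> L1) p = 1 \<or> (\<tau> \<circ> L1) p = -1"
      using A by (cases p) (auto simp: dU_arcs)
  next
    fix p q assume "ht_join D1 (s \<circ> Inl) p q" then show "(\<tau> \<circ> L1) q = (\<tau> \<circ> L1) p"
      using B[of "L1 p" "L1 q"] by (cases p; cases q) (auto simp: ht_U)
  next
    fix p q assume "hh_join D1 (s \<circ> Inl) p q" then show "(\<tau> \<circ> L1) q = - (\<tau> \<circ> L1) p"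
      using C[of "L1 p" "L1 q"] by (cases p; cases q) (auto simp: hh_U)
  next
    fix p q assume "tt_join D1 (s \<circ> Inl) p q" then show "(\<tau> \<circ> L1) q = - (\<tau> \<circ> L1) p"
      using E[of "L1 p" "L1 q"] by (cases p; cases q) (auto simp: tt_U)
  qed
  show "weight_map D2 (s \<circ> Inr) (\<tau> \<circ> L2)" unfolding weight_map_def
  proof (intro conjI allI impI ballI)
    fix p assume "p \<in> arcs D2" then show "(\<tau> \<circ> L2) p = 1 \<or> (\<tau> \<circ> L2) p = -1"
      using A by (cases p) (auto simp: dU_arcs)
  next
    fix p q assume "ht_join D2 (s \<circ> Inr) p q" then show "(\<tau> \<circ> L2) q = (\<tau> \<circ> L2) p"
      using B[of "L2 p" "L2 q"] by (cases p; cases q) (auto simp: ht_U)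
  next
    fix p q assume "hh_join D2 (s \<circ> Inr) p q" then show "(\<tau> \<circ> L2) q = - (\<tau> \<circ> L2) p"
      using C[of "L2 p" "L2 q"] by (cases p; cases q) (auto simp: hh_U)
  next
    fix p q assume "tt_join D2 (s \<circ> Inr) p q" then show "(\<tau> \<circ> L2) q = - (\<tau> \<circ> L2) p"
      using E[of "L2 p" "L2 q"] by (cases p; cases q) (auto simp: tt_U)
  qed
qed

definition tcomb :: "('a \<times> bool \<Rightarrow> int) \<Rightarrow> ('b \<times> bool \<Rightarrow> int) \<Rightarrow> ('a + 'b) \<times> bool \<Rightarrow> int" where
  "tcomb t1 t2 = (\<lambda>(z, k). case z of Inl x \<Rightarrow> t1 (x, k) | Inr y \<Rightarrow> t2 (y, k))"

lemma tcomb_simps[simp]: "tcomb t1 t2 (Inl x, k) = t1 (x, k)" "tcomb t1 t2 (Inr y, k) = t2 (y, k)"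
  by (simp_all add: tcomb_def)

lemma wm_comb:
  assumes "weight_map D1 (s \<circ> Inl) t1" "weight_map D2 (s \<circ> Inr) t2"
  shows "weight_map (dunion D1 D2) s (tcomb t1 t2)"
proof -
  have A1: "\<forall>p\<in>arcs D1. t1 p = 1 \<or> t1 p = -1"
    and B1: "\<And>p q. ht_join D1 (s \<circ> Inl) p q \<Longrightarrow> t1 q = t1 p"
    and C1: "\<And>p q. hh_join D1 (s \<circ> Inl) p q \<Longrightarrow> t1 q = - t1 p"
    and E1: "\<And>p q. tt_join D1 (s \<circ> Inl) p q \<Longrightarrow> t1 q = - t1 p"
    using assms(1) unfolding weight_map_def by blast+
  have A2: "\<forall>p\<in>arcs D2. t2 p = 1 \<or> t2 p = -1"
    and B2: "\<And>p q. ht_join D2 (s \<circ> Inr) p q \<Longrightarrow> t2 q = t2 p"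
    and C2: "\<And>p q. hh_join D2 (s \<circ> Inr) p q \<Longrightarrow> t2 q = - t2 p"
    and E2: "\<And>p q. tt_join D2 (s \<circ> Inr) p q \<Longrightarrow> t2 q = - t2 p"
    using assms(2) unfolding weight_map_def by blast+
  show ?thesis unfolding weight_map_def
  proof (intro conjI allI impI ballI)
    fix p assume "p \<in> arcs (dunion D1 D2)"
    then show "tcomb t1 t2 p = 1 \<or> tcomb t1 t2 p = -1"
      using A1 A2 by (induction p rule: arc_split) (auto simp: dU_arcs)
  next
    fix p q assume "ht_join (dunion D1 D2) s p q"
    then show "tcomb t1 t2 q = tcomb t1 t2 p"
      using B1 B2 by (induction p rule: arc_split; induction q rule: arc_split) (auto simp: ht_U)
  next
    fix p q assume "hh_join (dunion D1 D2) s p q"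
    then show "tcomb t1 t2 q = - tcomb t1 t2 p"
      using C1 C2 by (induction p rule: arc_split; induction q rule: arc_split) (auto simp: hh_U)
  next
    fix p q assume "tt_join (dunion D1 D2) s p q"
    then show "tcomb t1 t2 q = - tcomb t1 t2 p"
      using E1 E2 by (induction p rule: arc_split; induction q rule: arc_split) (auto simp: tt_U)
  qed
qed

lemma virtual_U: "virtual (dunion D1 D2) = Inl ` virtual D1 \<union> Inr ` virtual D2"
  by (auto simp: virtual_def dU_simps)

lemma nonvirtual_U: "nonvirtual (dunion D1 D2) = Inl ` nonvirtual D1 \<union> Inr ` nonvirtual D2"
  by (auto simp: nonvirtual_def dU_simps)

lemma parity_with_U:
  assumes "wf_diagram D1" "wf_diagram D2"
  shows "parity_with (dunion D1 D2) \<tau> = parity_with D1 (\<tau> \<circ> L1) * parity_with D2 (\<tau> \<circ> L2)"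
proof -
  have f: "finite (virtual D1)" "finite (virtual D2)"
    using assms by (auto simp: wf_diagram_def virtual_def)
  have "parity_with (dunion D1 D2) \<tau> =
     (\<Prod>v\<in>Inl ` virtual D1. \<tau> (v, True) * \<tau> (v, False)) * (\<Prod>v\<in>Inr ` virtual D2. \<tau> (v, True) * \<tau> (v, False))"
    unfolding parity_with_def virtual_U using f by (intro prod.union_disjoint) auto
  also have "\<dots> = parity_with D1 (\<tau> \<circ> L1) * parity_with D2 (\<tau> \<circ> L2)"
    unfolding parity_with_def by (simp add: prod.reindex)
  finally show ?thesis .
qed

lemma states_restrict:
  assumes "s \<in> states (dunion D1 D2)"
  shows "s \<circ> Inl \<in> states D1" "s \<circ> Inr \<in> states D2"
  using assms by (auto simp: states_def nonvirtual_U)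

lemma parity_U:
  assumes wf: "wf_diagram D1" "wf_diagram D2" and pi: "parity_independent D1" "parity_independent D2"
    and s: "s \<in> states (dunion D1 D2)"
  shows "parity (dunion D1 D2) s = parity D1 (s \<circ> Inl) * parity D2 (s \<circ> Inr)"
proof -
  define t1 where "t1 = (SOME \<tau>. weight_map D1 (s \<circ> Inl) \<tau>)"
  define t2 where "t2 = (SOME \<tau>. weight_map D2 (s \<circ> Inr) \<tau>)"
  have w1: "weight_map D1 (s \<circ> Inl) t1" unfolding t1_def
    using weight_map_exists[OF wf(1)] by (rule someI_ex)
  have w2: "weight_map D2 (s \<circ> Inr) t2" unfolding t2_def
    using weight_map_exists[OF wf(2)] by (rule someI_ex)
  define t where "t = (SOME \<tau>. weight_map (dunion D1 D2) s \<tau>)"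
  have w: "weight_map (dunion D1 D2) s t" unfolding t_def
    using wm_comb[OF w1 w2] by (rule someI[where P="weight_map (dunion D1 D2) s"])
  have "parity (dunion D1 D2) s = parity_with D1 (t \<circ> L1) * parity_with D2 (t \<circ> L2)"
    unfolding parity_def t_def[symmetric] by (rule parity_with_U[OF wf])
  also have "parity_with D1 (t \<circ> L1) = parity_with D1 t1"
    using pi(1) states_restrict(1)[OF s] wm_restrict(1)[OF w] w1 unfolding parity_independent_def by blast
  also have "parity_with D2 (t \<circ> L2) = parity_with D2 t2"
    using pi(2) states_restrict(2)[OF s] wm_restrict(2)[OF w] w2 unfolding parity_independent_def by blast
  finally show ?thesis unfolding parity_def t1_def t2_def .
qed

lemma arc_cases:
  obtains x k where "z = (Inl x, k)" | y k where "z = (Inr y, k)"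
  by (metis obj_sumE prod.collapse)

lemma mem_L_img[simp]:
  "(Inl x, k) \<in> L1 ` A \<longleftrightarrow> (x, k) \<in> A"
  "(Inr y, k) \<in> L2 ` B \<longleftrightarrow> (y, k) \<in> B"
  "(Inr y, k) \<notin> L1 ` A"
  "(Inl x, k) \<notin> L2 ` B"
  by (auto simp: image_iff Bex_def)

lemma arcs_U: "arcs (dunion D1 D2) = L1 ` arcs D1 \<union> L2 ` arcs D2"
proof (rule set_eqI)
  fix z show "z \<in> arcs (dunion D1 D2) \<longleftrightarrow> z \<in> L1 ` arcs D1 \<union> L2 ` arcs D2"
    by (cases z rule: arc_cases) (simp_all add: dU_arcs)
qed

lemma joined_L1: "joined D1 (s \<circ> Inl) a b \<Longrightarrow> joined (dunion D1 D2) s (L1 a) (L1 b)"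
  by (cases a; cases b) (simp add: joined_U)

lemma joined_L2: "joined D2 (s \<circ> Inr) a b \<Longrightarrow> joined (dunion D1 D2) s (L2 a) (L2 b)"
  by (cases a; cases b) (simp add: joined_U)

lemma tr1:
  assumes "(P, Q) \<in> {(p, q). joined (dunion D1 D2) s p q}\<^sup>+"
  shows "(\<exists>a b. P = L1 a \<and> Q = L1 b \<and> (a, b) \<in> {(p, q). joined D1 (s \<circ> Inl) p q}\<^sup>+) \<or>
         (\<exists>a b. P = L2 a \<and> Q = L2 b \<and> (a, b) \<in> {(p, q). joined D2 (s \<circ> Inr) p q}\<^sup>+)"
  using assms
proof (induction rule: trancl_induct)
  case (base y)
  then show ?case
    by (induction P rule: arc_split; induction y rule: arc_split) (auto simp: joined_U)
next
  case (step y z)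
  from step.IH show ?case
  proof
    assume "\<exists>a b. P = L1 a \<and> y = L1 b \<and> (a, b) \<in> {(p, q). joined D1 (s \<circ> Inl) p q}\<^sup>+"
    then obtain a b where ab: "P = L1 a" "y = L1 b" "(a, b) \<in> {(p, q). joined D1 (s \<circ> Inl) p q}\<^sup>+" by blast
    obtain bx bk where b: "b = (bx, bk)" by (cases b)
    have j: "joined (dunion D1 D2) s (Inl bx, bk) z" using step.hyps(2) ab(2) b by simp
    show ?case
    proof (cases z rule: arc_cases)
      case (1 x k)
      with j have "joined D1 (s \<circ> Inl) b (x, k)" using b by (simp add: joined_U)
      then have "(b, (x, k)) \<in> {(p, q). joined D1 (s \<circ> Inl) p q}" by simp
      with ab(3) have "(a, (x, k)) \<in> {(p, q). joined D1 (s \<circ> Inl) p q}\<^sup>+" by (rule trancl_into_trancl)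
      moreover have "z = L1 (x, k)" using 1 by simp
      ultimately show ?thesis using ab(1) by blast
    next
      case (2 y k)
      with j show ?thesis by (simp add: joined_U)
    qed
  next
    assume "\<exists>a b. P = L2 a \<and> y = L2 b \<and> (a, b) \<in> {(p, q). joined D2 (s \<circ> Inr) p q}\<^sup>+"
    then obtain a b where ab: "P = L2 a" "y = L2 b" "(a, b) \<in> {(p, q). joined D2 (s \<circ> Inr) p q}\<^sup>+" by blast
    obtain bx bk where b: "b = (bx, bk)" by (cases b)
    have j: "joined (dunion D1 D2) s (Inr bx, bk) z" using step.hyps(2) ab(2) b by simp
    show ?case
    proof (cases z rule: arc_cases)
      case (1 x k)
      with j show ?thesis by (simp add: joined_U)
    next
      case (2 x k)
      with j have "joined D2 (s \<circ> Inr) b (x, k)" using b by (simp add: joined_U)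
      then have "(b, (x, k)) \<in> {(p, q). joined D2 (s \<circ> Inr) p q}" by simp
      with ab(3) have "(a, (x, k)) \<in> {(p, q). joined D2 (s \<circ> Inr) p q}\<^sup>+" by (rule trancl_into_trancl)
      moreover have "z = L2 (x, k)" using 2 by simp
      ultimately show ?thesis using ab(1) by blast
    qed
  qed
qed

lemma tr2:
  assumes "(a, b) \<in> {(p, q). joined D1 (s \<circ> Inl) p q}\<^sup>+"
  shows "(L1 a, L1 b) \<in> {(p, q). joined (dunion D1 D2) s p q}\<^sup>+"
  using assms
proof (induction rule: trancl_induct)
  case (base y) then show ?case using joined_L1 by blast
next
  case (step y z)
  have "(L1 y, L1 z) \<in> {(p, q). joined (dunion D1 D2) s p q}" using step.hyps(2) joined_L1 by blast
  then show ?case using step.IH by (meson trancl.trancl_into_trancl)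
qed

lemma tr3:
  assumes "(a, b) \<in> {(p, q). joined D2 (s \<circ> Inr) p q}\<^sup>+"
  shows "(L2 a, L2 b) \<in> {(p, q). joined (dunion D1 D2) s p q}\<^sup>+"
  using assms
proof (induction rule: trancl_induct)
  case (base y) then show ?case using joined_L2 by blast
next
  case (step y z)
  have "(L2 y, L2 z) \<in> {(p, q). joined (dunion D1 D2) s p q}" using step.hyps(2) joined_L2 by blast
  then show ?case using step.IH by (meson trancl.trancl_into_trancl)
qed

lemma inj_L1: "inj L1" by (auto intro!: injI simp: map_prod_def split: prod.splits)
lemma inj_L2: "inj L2" by (auto intro!: injI simp: map_prod_def split: prod.splits)

lemma class_L1:
  fixes D1 :: "'a diagram" and D2 :: "'b diagram"
  assumes p: "p \<in> arcs D1"
  shows "same_curve (dunion D1 D2) s `` {L1 p} = L1 ` (same_curve D1 (s \<circ> Inl) `` {p})"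
proof
  show "same_curve (dunion D1 D2) s `` {L1 p} \<subseteq> L1 ` (same_curve D1 (s \<circ> Inl) `` {p})"
  proof
    fix Q assume "Q \<in> same_curve (dunion D1 D2) s `` {L1 p}"
    then have "(L1 p, Q) \<in> Id_on (arcs (dunion D1 D2)) \<or> (L1 p, Q) \<in> {(p, q). joined (dunion D1 D2) s p q}\<^sup>+"
      unfolding same_curve_def by blast
    then show "Q \<in> L1 ` (same_curve D1 (s \<circ> Inl) `` {p})"
    proof
      assume "(L1 p, Q) \<in> Id_on (arcs (dunion D1 D2))"
      then have "Q = L1 p" by auto
      moreover have "p \<in> same_curve D1 (s \<circ> Inl) `` {p}" using p by (auto simp: same_curve_def)
      ultimately show ?thesis by blast
    next
      assume "(L1 p, Q) \<in> {(p, q). joined (dunion D1 D2) s p q}\<^sup>+"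
      from tr1[OF this] show ?thesis
      proof
        assume "\<exists>a b. L1 p = L1 a \<and> Q = L1 b \<and> (a, b) \<in> {(p, q). joined D1 (s \<circ> Inl) p q}\<^sup>+"
        then show ?thesis using inj_L1 unfolding same_curve_def inj_def by blast
      next
        assume "\<exists>a b. L1 p = L2 a \<and> Q = L2 b \<and> (a, b) \<in> {(p, q). joined D2 (s \<circ> Inr) p q}\<^sup>+"
        then show ?thesis by (cases p) auto
      qed
    qed
  qed
next
  show "L1 ` (same_curve D1 (s \<circ> Inl) `` {p}) \<subseteq> same_curve (dunion D1 D2) s `` {L1 p}"
  proof
    fix Q :: "('a + 'b) \<times> bool" assume "Q \<in> L1 ` (same_curve D1 (s \<circ> Inl) `` {p})"
    then obtain b where b1: "Q = L1 b" and b0: "b \<in> same_curve D1 (s \<circ> Inl) `` {p}" by (rule imageE)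
    have b: "Q = L1 b" "(p, b) \<in> same_curve D1 (s \<circ> Inl)" using b0 b1 by auto
    from b(2) have "(p, b) \<in> Id_on (arcs D1) \<or> (p, b) \<in> {(p, q). joined D1 (s \<circ> Inl) p q}\<^sup>+"
      unfolding same_curve_def by blast
    then show "Q \<in> same_curve (dunion D1 D2) s `` {L1 p}"
    proof
      assume "(p, b) \<in> Id_on (arcs D1)"
      then have "b = p" by auto
      then show ?thesis using b(1) p by (auto simp: same_curve_def arcs_U)
    next
      assume "(p, b) \<in> {(p, q). joined D1 (s \<circ> Inl) p q}\<^sup>+"
      from tr2[OF this] show ?thesis using b(1) by (auto simp: same_curve_def)
    qed
  qed
qed

lemma class_L2:
  fixes D1 :: "'a diagram" and D2 :: "'b diagram"
  assumes p: "p \<in> arcs D2"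
  shows "same_curve (dunion D1 D2) s `` {L2 p} = L2 ` (same_curve D2 (s \<circ> Inr) `` {p})"
proof
  show "same_curve (dunion D1 D2) s `` {L2 p} \<subseteq> L2 ` (same_curve D2 (s \<circ> Inr) `` {p})"
  proof
    fix Q assume "Q \<in> same_curve (dunion D1 D2) s `` {L2 p}"
    then have "(L2 p, Q) \<in> Id_on (arcs (dunion D1 D2)) \<or> (L2 p, Q) \<in> {(p, q). joined (dunion D1 D2) s p q}\<^sup>+"
      unfolding same_curve_def by blast
    then show "Q \<in> L2 ` (same_curve D2 (s \<circ> Inr) `` {p})"
    proof
      assume "(L2 p, Q) \<in> Id_on (arcs (dunion D1 D2))"
      then have "Q = L2 p" by auto
      moreover have "p \<in> same_curve D2 (s \<circ> Inr) `` {p}" using p by (auto simp: same_curve_def)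
      ultimately show ?thesis by blast
    next
      assume "(L2 p, Q) \<in> {(p, q). joined (dunion D1 D2) s p q}\<^sup>+"
      from tr1[OF this] show ?thesis
      proof
        assume "\<exists>a b. L2 p = L1 a \<and> Q = L1 b \<and> (a, b) \<in> {(p, q). joined D1 (s \<circ> Inl) p q}\<^sup>+"
        then show ?thesis by (cases p) auto
      next
        assume "\<exists>a b. L2 p = L2 a \<and> Q = L2 b \<and> (a, b) \<in> {(p, q). joined D2 (s \<circ> Inr) p q}\<^sup>+"
        then show ?thesis using inj_L2 unfolding same_curve_def inj_def by blast
      qed
    qed
  qed
next
  show "L2 ` (same_curve D2 (s \<circ> Inr) `` {p}) \<subseteq> same_curve (dunion D1 D2) s `` {L2 p}"
  proof
    fix Q :: "('a + 'b) \<times> bool" assume "Q \<in> L2 ` (same_curve D2 (s \<circ> Inr) `` {p})"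
    then obtain b where b1: "Q = L2 b" and b0: "b \<in> same_curve D2 (s \<circ> Inr) `` {p}" by (rule imageE)
    have b: "Q = L2 b" "(p, b) \<in> same_curve D2 (s \<circ> Inr)" using b0 b1 by auto
    from b(2) have "(p, b) \<in> Id_on (arcs D2) \<or> (p, b) \<in> {(p, q). joined D2 (s \<circ> Inr) p q}\<^sup>+"
      unfolding same_curve_def by blast
    then show "Q \<in> same_curve (dunion D1 D2) s `` {L2 p}"
    proof
      assume "(p, b) \<in> Id_on (arcs D2)"
      then have "b = p" by auto
      then show ?thesis using b(1) p by (auto simp: same_curve_def arcs_U)
    next
      assume "(p, b) \<in> {(p, q). joined D2 (s \<circ> Inr) p q}\<^sup>+"
      from tr3[OF this] show ?thesis using b(1) by (auto simp: same_curve_def)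
    qed
  qed
qed

lemma quot_U:
  fixes D1 :: "'a diagram" and D2 :: "'b diagram"
  shows "arcs (dunion D1 D2) // same_curve (dunion D1 D2) s =
     image L1 ` (arcs D1 // same_curve D1 (s \<circ> Inl)) \<union> image L2 ` (arcs D2 // same_curve D2 (s \<circ> Inr))"
proof -
  have "arcs (dunion D1 D2) // same_curve (dunion D1 D2) s =
     (\<Union>p\<in>arcs D1. {same_curve (dunion D1 D2) s `` {L1 p}}) \<union> (\<Union>p\<in>arcs D2. {same_curve (dunion D1 D2) s `` {L2 p}})"
    unfolding quotient_def arcs_U by (simp only: UN_Un SUP_image o_def)
  also have "\<dots> = (\<Union>p\<in>arcs D1. {L1 ` (same_curve D1 (s \<circ> Inl) `` {p})}) \<union>
                   (\<Union>p\<in>arcs D2. {L2 ` (same_curve D2 (s \<circ> Inr) `` {p})})"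
    by (simp add: class_L1 class_L2)
  also have "\<dots> = image L1 ` (arcs D1 // same_curve D1 (s \<circ> Inl)) \<union> image L2 ` (arcs D2 // same_curve D2 (s \<circ> Inr))"
    unfolding quotient_def by (simp only: image_UN image_insert image_empty)
  finally show ?thesis .
qed

lemma finite_quot: "finite A \<Longrightarrow> finite (A // r)"
  unfolding quotient_def by auto

lemma ncurves_U:
  fixes D1 :: "'a diagram" and D2 :: "'b diagram"
  assumes "wf_diagram D1" "wf_diagram D2"
  shows "ncurves (dunion D1 D2) s = ncurves D1 (s \<circ> Inl) + ncurves D2 (s \<circ> Inr)"
proof -
  define Q1 where "Q1 = arcs D1 // same_curve D1 (s \<circ> Inl)"
  define Q2 where "Q2 = arcs D2 // same_curve D2 (s \<circ> Inr)"
  define M1 :: "'a \<times> bool \<Rightarrow> ('a + 'b) \<times> bool" where "M1 = L1"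
  define M2 :: "'b \<times> bool \<Rightarrow> ('a + 'b) \<times> bool" where "M2 = L2"
  have f: "finite Q1" "finite Q2" using wf_facts(5)[OF assms(1)] wf_facts(5)[OF assms(2)]
    unfolding Q1_def Q2_def by (auto intro: finite_quot)
  have ne1: "C \<noteq> {}" if CQ: "C \<in> Q1" for C
  proof -
    obtain p where "p \<in> arcs D1" "C = same_curve D1 (s \<circ> Inl) `` {p}"
      using CQ unfolding Q1_def by (rule quotientE)
    then have "p \<in> C" unfolding same_curve_def by auto
    then show ?thesis by blast
  qed
  have disj: "image M1 ` Q1 \<inter> image M2 ` Q2 = {}"
  proof (rule ccontr)
    assume "image M1 ` Q1 \<inter> image M2 ` Q2 \<noteq> {}"
    then obtain C C' where CC: "C \<in> Q1" "M1 ` C = M2 ` C'" by blast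
    moreover obtain c where "c \<in> C" using ne1 CC(1) by blast
    ultimately have "M1 c \<in> M2 ` C'" by blast
    then show False unfolding M1_def M2_def by (cases c) auto
  qed
  have i1: "inj_on (image M1) Q1" unfolding M1_def by (meson inj_L1 inj_image_eq_iff inj_onI)
  have i2: "inj_on (image M2) Q2" unfolding M2_def by (meson inj_L2 inj_image_eq_iff inj_onI)
  have "card (arcs (dunion D1 D2) // same_curve (dunion D1 D2) s) = card (image M1 ` Q1 \<union> image M2 ` Q2)"
    unfolding quot_U Q1_def Q2_def M1_def M2_def ..
  also have "\<dots> = card Q1 + card Q2"
    using f disj i1 i2 by (simp add: card_Un_disjoint card_image)
  finally show ?thesis unfolding ncurves_def Q1_def Q2_def by (simp add: dU_simps)
qed

lemma card_Inl_Inr: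
  fixes A :: "'a set" and B :: "'b set"
  assumes "finite A" "finite B"
  shows "card (Inl ` A \<union> Inr ` B) = card A + card B"
proof -
  have "card (Inl ` A \<union> Inr ` B) = card ((Inl :: 'a \<Rightarrow> 'a + 'b) ` A) + card ((Inr :: 'b \<Rightarrow> 'a + 'b) ` B)"
    by (rule card_Un_disjoint) (auto simp: assms)
  also have "\<dots> = card A + card B" by (simp add: card_image)
  finally show ?thesis .
qed

lemma count_res_U:
  fixes D1 :: "'a diagram" and D2 :: "'b diagram"
  assumes "finite (crossings D1)" "finite (crossings D2)"
  shows "count_res (dunion D1 D2) s t r = count_res D1 (s \<circ> Inl) t r + count_res D2 (s \<circ> Inr) t r"
proof -
  have "{x \<in> crossings (dunion D1 D2). ctyp (dunion D1 D2) x = t \<and> s x = r} =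
        Inl ` {x \<in> crossings D1. ctyp D1 x = t \<and> (s \<circ> Inl) x = r} \<union> Inr ` {x \<in> crossings D2. ctyp D2 x = t \<and> (s \<circ> Inr) x = r}"
    by (auto simp: dU_simps)
  then show ?thesis unfolding count_res_def using assms
    by (simp add: card_Inl_Inr)
qed

lemma ccount_U:
  fixes D1 :: "'a diagram" and D2 :: "'b diagram"
  assumes "finite (crossings D1)" "finite (crossings D2)"
  shows "ccount (dunion D1 D2) = ccount D1 + ccount D2"
proof -
  have "classical (dunion D1 D2) = Inl ` classical D1 \<union> Inr ` classical D2"
    by (auto simp: classical_def dU_simps)
  moreover have "finite (classical D1)" "finite (classical D2)" using assms by (auto simp: classical_def)
  ultimately show ?thesis unfolding ccount_def
    by (simp add: card_Inl_Inr)
qed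

lemma Rbar_U:
  fixes D1 :: "'a diagram" and D2 :: "'b diagram"
  assumes "wf_diagram D1" "wf_diagram D2"
  shows "Rbar (dunion D1 D2) s = Rbar D1 (s \<circ> Inl) * Rbar D2 (s \<circ> Inr)"
proof -
  have f: "finite (crossings D1)" "finite (crossings D2)" using assms by (auto simp: wf_diagram_def)
  note C = count_res_U[OF f]
  have a: "a_st (dunion D1 D2) s = a_st D1 (s \<circ> Inl) + a_st D2 (s \<circ> Inr)"
    unfolding a_st_def C by simp
  have b: "b_st (dunion D1 D2) s = b_st D1 (s \<circ> Inl) + b_st D2 (s \<circ> Inr)"
    unfolding b_st_def C by simp
  have al: "alpha_st (dunion D1 D2) s = alpha_st D1 (s \<circ> Inl) + alpha_st D2 (s \<circ> Inr)"
    unfolding alpha_st_def C by simp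
  have be: "beta_st (dunion D1 D2) s = beta_st D1 (s \<circ> Inl) + beta_st D2 (s \<circ> Inr)"
    unfolding beta_st_def C by simp
  have n: "ncurves (dunion D1 D2) s = ncurves D1 (s \<circ> Inl) + ncurves D2 (s \<circ> Inr)"
    by (rule ncurves_U[OF assms])
  have e: "2 * a_st (dunion D1 D2) s + 4 * b_st (dunion D1 D2) s =
     (2 * a_st D1 (s \<circ> Inl) + 4 * b_st D1 (s \<circ> Inl)) + (2 * a_st D2 (s \<circ> Inr) + 4 * b_st D2 (s \<circ> Inr))"
    unfolding a b by simp
  show ?thesis unfolding Rbar_def e al be n fls_X_intpow_times_fls_X_intpow[symmetric]
    by (simp add: power_add algebra_simps)
qed

lemma pconst_add: "[:a + b:] = [:a:] + [:b:]"
  by simp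

lemma pconst_sum: "[:sum f A:] = (\<Sum>x\<in>A. [:f x:])"
proof (induction A rule: infinite_finite_induct)
  case (insert x F)
  then show ?case by (simp del: add_pCons add: pconst_add)
qed auto

lemma pconst_negpow: "[:(-1) ^ n * x:] = (-1 :: 'a :: comm_ring_1 poly) ^ n * [:x:]"
proof -
  have "[:(-1) ^ n * x:] = [:-1:] ^ n * [:x:]" by (simp only: mult_to_poly poly_const_pow)
  moreover have "[:-1:] = (-1 :: 'a poly)" by (metis minus_pCons pCons_one minus_zero)
  ultimately show ?thesis by simp
qed

lemma Rinv_split:
  assumes fin: "finite (states D)" and par: "\<forall>s\<in>states D. parity D s = 1 \<or> parity D s = -1"
  shows "Rinv D = [:phi D:] * [:0, 1:] + [:psi D:]"
proof -
  define A where "A = (\<lambda>s. if parity D s = -1 then Rbar D s else 0)"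
  define B where "B = (\<lambda>s. if parity D s = 1 then Rbar D s else 0)"
  have phi: "phi D = (-1) ^ ccount D * (\<Sum>s\<in>states D. A s)"
    unfolding phi_def A_def using fin by (simp add: sum.inter_filter)
  have psi: "psi D = (-1) ^ ccount D * (\<Sum>s\<in>states D. B s)"
    unfolding psi_def B_def using fin by (simp add: sum.inter_filter)
  have t: "[:Rbar D s:] * [:0, 1:] ^ nat ((1 - parity D s) div 2) = [:A s:] * [:0, 1:] + [:B s:]"
    if "s \<in> states D" for s
    using par that by (auto simp: A_def B_def)
  have "Rinv D = (-1) ^ ccount D * (\<Sum>s\<in>states D. [:A s:] * [:0, 1:] + [:B s:])"
    unfolding Rinv_def using t by simp
  also have "\<dots> = (-1) ^ ccount D * ([:\<Sum>s\<in>states D. A s:] * [:0, 1:] + [:\<Sum>s\<in>states D. B s:])"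
    by (simp only: sum.distrib sum_distrib_right pconst_sum)
  also have "\<dots> = [:phi D:] * [:0, 1:] + [:psi D:]"
    unfolding phi psi pconst_negpow by (simp add: algebra_simps)
  finally show ?thesis .
qed

lemma states_bij:
  fixes D1 :: "'a diagram" and D2 :: "'b diagram"
  shows "bij_betw (\<lambda>(s1, s2). case_sum s1 s2) (states D1 \<times> states D2) (states (dunion D1 D2))"
proof (rule bij_betw_byWitness[where f' = "\<lambda>s. (s \<circ> Inl, s \<circ> Inr)"])
  show "\<forall>a\<in>states D1 \<times> states D2. ((case a of (s1, s2) \<Rightarrow> case_sum s1 s2) \<circ> Inl,
      (case a of (s1, s2) \<Rightarrow> case_sum s1 s2) \<circ> Inr) = a"
    by (auto simp: fun_eq_iff)
  show "\<forall>a'\<in>states (dunion D1 D2). (case (a' \<circ> Inl, a' \<circ> Inr) of (s1, s2) \<Rightarrow> case_sum s1 s2) = a'"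
    by (auto simp: fun_eq_iff split: sum.split)
  show "(\<lambda>(s1, s2). case_sum s1 s2) ` (states D1 \<times> states D2) \<subseteq> states (dunion D1 D2)"
    by (auto simp: states_def nonvirtual_U inj_image_mem_iff split: sum.split)
  show "(\<lambda>s. (s \<circ> Inl, s \<circ> Inr)) ` states (dunion D1 D2) \<subseteq> states D1 \<times> states D2"
    using states_restrict by blast
qed

lemma case_sum_comp[simp]: "case_sum s1 s2 \<circ> Inl = s1" "case_sum s1 s2 \<circ> Inr = s2"
  by (simp_all add: fun_eq_iff)

theorem lemma4p4:
  fixes D1 :: "'a diagram" and D2 :: "'b diagram"
  assumes "wf_diagram D1" and "wf_diagram D2"
    and "parity_independent D1" and "parity_independent D2"
  shows "Rinv (dunion D1 D2) = [: phi (dunion D1 D2) :] * [:0, 1:] + [: psi (dunion D1 D2) :] \<and>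
     phi (dunion D1 D2) = phi D1 * psi D2 + psi D1 * phi D2 \<and>
     psi (dunion D1 D2) = phi D1 * phi D2 + psi D1 * psi D2"
proof -
  note wf = assms(1,2) and pi = assms(3,4)
  let ?U = "dunion D1 D2"
  have fc: "finite (crossings D1)" "finite (crossings D2)" using wf by (auto simp: wf_diagram_def)
  have fcU: "finite (crossings ?U)" using fc by (simp add: dU_simps)
  have fS: "finite (states D1)" "finite (states D2)" "finite (states ?U)"
    using finite_states fc fcU by blast+
  have p1: "parity D1 s1 = 1 \<or> parity D1 s1 = -1" for s1 by (rule parity_pm1[OF wf(1)])
  have p2: "parity D2 s2 = 1 \<or> parity D2 s2 = -1" for s2 by (rule parity_pm1[OF wf(2)])
  have pU: "parity ?U s = parity D1 (s \<circ> Inl) * parity D2 (s \<circ> Inr)" if "s \<in> states ?U" for s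
    by (rule parity_U[OF wf pi that])
  have pU': "\<forall>s\<in>states ?U. parity ?U s = 1 \<or> parity ?U s = -1"
  proof
    fix s assume "s \<in> states ?U"
    then show "parity ?U s = 1 \<or> parity ?U s = -1"
      unfolding pU[OF \<open>s \<in> states ?U\<close>] using p1[of "s \<circ> Inl"] p2[of "s \<circ> Inr"] by auto
  qed
  have c1: "Rinv ?U = [: phi ?U :] * [:0, 1:] + [: psi ?U :]" by (rule Rinv_split[OF fS(3) pU'])
  have bij: "bij_betw (\<lambda>(s1, s2). case_sum s1 s2) (states D1 \<times> states D2) (states ?U)"
    by (rule states_bij)
  have sumU: "(\<Sum>s\<in>states ?U. F s) = (\<Sum>s1\<in>states D1. \<Sum>s2\<in>states D2. F (case_sum s1 s2))"
    for F :: "('a + 'b \<Rightarrow> res) \<Rightarrow> int fls"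
  proof -
    have "(\<Sum>s\<in>states ?U. F s) = (\<Sum>x\<in>states D1 \<times> states D2. F ((\<lambda>(s1, s2). case_sum s1 s2) x))"
      using sum.reindex_bij_betw[OF bij, of F] by simp
    also have "\<dots> = (\<Sum>s1\<in>states D1. \<Sum>s2\<in>states D2. F (case_sum s1 s2))"
      by (simp add: sum.cartesian_product split_def)
    finally show ?thesis .
  qed
  have memU: "case_sum s1 s2 \<in> states ?U" if "s1 \<in> states D1" "s2 \<in> states D2" for s1 s2
    using bij that by (auto dest: bij_betwE)
  define A1 where "A1 = (\<lambda>s. if parity D1 s = -1 then Rbar D1 s else 0)"
  define B1 where "B1 = (\<lambda>s. if parity D1 s = 1 then Rbar D1 s else 0)"
  define A2 where "A2 = (\<lambda>s. if parity D2 s = -1 then Rbar D2 s else 0)"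
  define B2 where "B2 = (\<lambda>s. if parity D2 s = 1 then Rbar D2 s else 0)"
  define e1 where "e1 = ((-1) ^ ccount D1 :: int fls)"
  define e2 where "e2 = ((-1) ^ ccount D2 :: int fls)"
  have phi1: "phi D1 = e1 * (\<Sum>s\<in>states D1. A1 s)"
    unfolding phi_def A1_def e1_def using fS by (simp add: sum.inter_filter)
  have psi1: "psi D1 = e1 * (\<Sum>s\<in>states D1. B1 s)"
    unfolding psi_def B1_def e1_def using fS by (simp add: sum.inter_filter)
  have phi2: "phi D2 = e2 * (\<Sum>s\<in>states D2. A2 s)"
    unfolding phi_def A2_def e2_def using fS by (simp add: sum.inter_filter)
  have psi2: "psi D2 = e2 * (\<Sum>s\<in>states D2. B2 s)"
    unfolding psi_def B2_def e2_def using fS by (simp add: sum.inter_filter)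
  have eU: "(-1) ^ ccount ?U = e1 * (e2 :: int fls)"
    unfolding e1_def e2_def ccount_U[OF fc] by (simp add: power_add)
  have phiU: "phi ?U = e1 * e2 * (\<Sum>s1\<in>states D1. \<Sum>s2\<in>states D2. A1 s1 * B2 s2 + B1 s1 * A2 s2)"
  proof -
    have "phi ?U = e1 * e2 * (\<Sum>s\<in>states ?U. if parity ?U s = -1 then Rbar ?U s else 0)"
      unfolding phi_def eU using fS by (simp add: sum.inter_filter)
    also have "(\<Sum>s\<in>states ?U. if parity ?U s = -1 then Rbar ?U s else 0) =
       (\<Sum>s1\<in>states D1. \<Sum>s2\<in>states D2. A1 s1 * B2 s2 + B1 s1 * A2 s2)"
      unfolding sumU
    proof (intro sum.cong refl)
      fix s1 s2 assume s: "s1 \<in> states D1" "s2 \<in> states D2"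
      have "parity ?U (case_sum s1 s2) = parity D1 s1 * parity D2 s2"
        using pU[OF memU[OF s]] by simp
      moreover have "Rbar ?U (case_sum s1 s2) = Rbar D1 s1 * Rbar D2 s2"
        using Rbar_U[OF wf, of "case_sum s1 s2"] by simp
      ultimately show "(if parity ?U (case_sum s1 s2) = -1 then Rbar ?U (case_sum s1 s2) else 0) =
          A1 s1 * B2 s2 + B1 s1 * A2 s2"
        using p1[of s1] p2[of s2] by (auto simp: A1_def B1_def A2_def B2_def)
    qed
    finally show ?thesis .
  qed
  have psiU: "psi ?U = e1 * e2 * (\<Sum>s1\<in>states D1. \<Sum>s2\<in>states D2. A1 s1 * A2 s2 + B1 s1 * B2 s2)"
  proof -
    have "psi ?U = e1 * e2 * (\<Sum>s\<in>states ?U. if parity ?U s = 1 then Rbar ?U s else 0)"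
      unfolding psi_def eU using fS by (simp add: sum.inter_filter)
    also have "(\<Sum>s\<in>states ?U. if parity ?U s = 1 then Rbar ?U s else 0) =
       (\<Sum>s1\<in>states D1. \<Sum>s2\<in>states D2. A1 s1 * A2 s2 + B1 s1 * B2 s2)"
      unfolding sumU
    proof (intro sum.cong refl)
      fix s1 s2 assume s: "s1 \<in> states D1" "s2 \<in> states D2"
      have "parity ?U (case_sum s1 s2) = parity D1 s1 * parity D2 s2"
        using pU[OF memU[OF s]] by simp
      moreover have "Rbar ?U (case_sum s1 s2) = Rbar D1 s1 * Rbar D2 s2"
        using Rbar_U[OF wf, of "case_sum s1 s2"] by simp
      ultimately show "(if parity ?U (case_sum s1 s2) = 1 then Rbar ?U (case_sum s1 s2) else 0) =
          A1 s1 * A2 s2 + B1 s1 * B2 s2"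
        using p1[of s1] p2[of s2] by (auto simp: A1_def B1_def A2_def B2_def)
    qed
    finally show ?thesis .
  qed
  have c2: "phi ?U = phi D1 * psi D2 + psi D1 * phi D2"
    unfolding phiU phi1 psi1 phi2 psi2
    by (simp add: sum.distrib sum_product algebra_simps)
  have c3: "psi ?U = phi D1 * phi D2 + psi D1 * psi D2"
    unfolding psiU phi1 psi1 phi2 psi2
    by (simp add: sum.distrib sum_product algebra_simps)
  show ?thesis using c1 c2 c3 by blast
qed

end
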